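(* Assume the setup in the context, with the fine-tuning regime, and let $0<\epsilon\le 1$ be such that $|\langle\tau_i,\tau_j\rangle|\le\epsilon\|\tau_i\|\|\tau_j\|$ for all $i\neq j$. Let $\mathbf{T}=[\tau_1,\dots,\tau_T]\in\mathbb{R}^{d\times T}$, $\mathbf{G}=\mathbf{T}^\top\mathbf{T}$ with eigenvalues $\lambda_1(\mathbf{G})\ge\dots\ge\lambda_T(\mathbf{G})$, and $1\le M<T$. Let $\mathbf{W}_e\in\mathbb{R}^{T\times M}$, $\mathbf{W}_d\in\mathbb{R}^{M\times T}$, $\hat{\mathbf{T}}=\mathbf{T}\mathbf{W}_e\mathbf{W}_d$ with $i$-th column $\hat\tau_i$, and suppose $\|\hat{\mathbf{T}}-\mathbf{T}\|_2^2=\lambda_{M+1}(\mathbf{G})$ (spectral norm). Fix $i\in[T]$ and $\alpha_i\in[0,1]$, let $\theta_{\mathrm{Neg},i}=\theta_0-\alpha_i\hat\tau_i$, and assume local smoothness holds with radius $r\ge 2\sqrt{C}+\sqrt{\lambda_{M+1}(\mathbf{G})}$. Then for every $j\neq i$, $$\mathcal{L}_j(\theta_{\mathrm{Neg},i})-\mathcal{L}_j(\theta_0)\le L_jC\Big(\frac{5}{2}+2\epsilon\Big)+L_j\lambda_{M+1}(\mathbf{G}).$$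
   Context: Setup: $\theta_0\in\mathbb{R}^d$ is a pretrained parameter vector; $\theta_1,\dots,\theta_T\in\mathbb{R}^d$ are fine-tuned parameters and $\tau_i:=\theta_i-\theta_0$ are task vectors. For each task $i$, $\mathcal{L}_i:\mathbb{R}^d\to\mathbb{R}$ is a differentiable loss (population risk). Norms are Euclidean. Fine-tuning regime: $\nabla\mathcal{L}_i(\theta_i)=0$ for all $i\in[T]$, and there is $C>0$ with $\|\tau_i\|^2\le C$ for all $i$. Local smoothness with radius $r>0$: for each $i$ there is $L_i\ge 0$ such that for all $\theta$ with $\|\theta-\theta_i\|\le r$, $\big|\mathcal{L}_i(\theta)-\mathcal{L}_i(\theta_i)-\langle\theta-\theta_i,\nabla\mathcal{L}_i(\theta_i)\rangle\big|\le\frac{L_i}{2}\|\theta-\theta_i\|^2$. The hypothesis $\|\hat{\mathbf{T}}-\mathbf{T}\|_2^2=\lambda_{M+1}(\mathbf{G})$ says the autoencoder reconstruction attains the optimal rank-$M$ spectral-norm error. *)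

theory Defs
  imports "HOL-Analysis.Analysis" "Jordan_Normal_Form.Char_Poly"
    "HOL-Computational_Algebra.Polynomial"
begin

definition gram_mat :: "nat \<Rightarrow> (nat \<Rightarrow> 'a::real_inner) \<Rightarrow> real mat" where
  "gram_mat n tau = mat n n (\<lambda>(i,j). tau i \<bullet> tau j)"

(* k-th largest eigenvalue (1-indexed, counted with algebraic multiplicity) of a square real
   matrix whose characteristic polynomial splits over the reals (e.g. a symmetric matrix):
   lambda_1 >= lambda_2 >= ... *)
definition eig_desc :: "real mat \<Rightarrow> nat \<Rightarrow> real" where
  "eig_desc A k = rev (sorted_list_of_multiset (proots (char_poly A))) ! (k - 1)"

(* Spectral (operator 2-) norm of the matrix with columns cols 0, ..., cols (n-1),
   viewed as a linear map R^n -> R^d *)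
definition spec_norm_cols :: "nat \<Rightarrow> (nat \<Rightarrow> 'a::real_normed_vector) \<Rightarrow> real" where
  "spec_norm_cols n v =
     Sup {norm (\<Sum>k<n. c k *\<^sub>R v k) | c. (\<Sum>k<n. (c k)\<^sup>2) \<le> 1}"

(* i-th column of  T We Wd  (We : n x M, Wd : M x n), columns of T given by tau *)
definition recon_col :: "nat \<Rightarrow> nat \<Rightarrow> (nat \<Rightarrow> 'a::real_vector) \<Rightarrow>
    (nat \<Rightarrow> nat \<Rightarrow> real) \<Rightarrow> (nat \<Rightarrow> nat \<Rightarrow> real) \<Rightarrow> nat \<Rightarrow> 'a" where
  "recon_col n m tau We Wd i = (\<Sum>k<n. (\<Sum>l<m. We k l * Wd l i) *\<^sub>R tau k)"

end

theory Submission
  imports Defs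
begin


lemma col_le_spec:
  fixes v :: "nat \<Rightarrow> 'a::real_normed_vector"
  assumes "i < n"
  shows "norm (v i) \<le> spec_norm_cols n v"
proof -
  let ?S = "{norm (\<Sum>k<n. c k *\<^sub>R v k) | c. (\<Sum>k<n. (c k)\<^sup>2) \<le> 1}"
  have bdd: "bdd_above ?S"
  proof (rule bdd_aboveI)
    fix x assume "x \<in> ?S"
    then obtain c where x: "x = norm (\<Sum>k<n. c k *\<^sub>R v k)" and c: "(\<Sum>k<n. (c k)\<^sup>2) \<le> 1" by blast
    have ck: "\<bar>c k\<bar> \<le> 1" if "k < n" for k
    proof -
      have "(c k)\<^sup>2 \<le> (\<Sum>k<n. (c k)\<^sup>2)"
        using that by (intro member_le_sum) auto
      then have "(c k)\<^sup>2 \<le> 1" using c by linarith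
      then show ?thesis by (simp add: abs_square_le_1)
    qed
    have "x \<le> (\<Sum>k<n. norm (c k *\<^sub>R v k))" unfolding x by (rule norm_sum)
    also have "\<dots> \<le> (\<Sum>k<n. norm (v k))"
      using ck by (intro sum_mono) (auto intro: mult_left_le_one_le)
    finally show "x \<le> (\<Sum>k<n. norm (v k))" .
  qed
  define c where "c = (\<lambda>k. if k = i then 1 else (0::real))"
  have "(\<lambda>k. (c k)\<^sup>2) = c" unfolding c_def by auto
  then have s1: "(\<Sum>k<n. (c k)\<^sup>2) = 1" using assms
    by (simp only:) (simp add: c_def sum.delta)
  have cv: "\<And>k. c k *\<^sub>R v k = (if k = i then v k else 0)" by (simp add: c_def)
  have s2: "(\<Sum>k<n. c k *\<^sub>R v k) = v i" using assms
    by (simp only: cv) (simp add: sum.delta)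
  have "norm (v i) \<in> ?S" using s1 s2 by (intro CollectI exI[of _ c]) simp
  then show ?thesis unfolding spec_norm_cols_def using bdd by (rule cSup_upper)
qed

theorem mainTheorem9:
  fixes \<theta>0 :: "'a::euclidean_space"
    and \<theta> :: "nat \<Rightarrow> 'a"
    and \<L> :: "nat \<Rightarrow> 'a \<Rightarrow> real"
    and grad :: "nat \<Rightarrow> 'a \<Rightarrow> 'a"
    and Lsm :: "nat \<Rightarrow> real"
    and T M :: nat
    and C \<epsilon> r \<alpha> :: real
    and We Wd :: "nat \<Rightarrow> nat \<Rightarrow> real"
    and i :: nat
  defines "\<tau> \<equiv> (\<lambda>k. \<theta> k - \<theta>0)"
  defines "lamM1 \<equiv> eig_desc (gram_mat T \<tau>) (M + 1)"
  assumes diff: "\<And>k x. k < T \<Longrightarrow> (\<L> k has_derivative (\<lambda>h. grad k x \<bullet> h)) (at x)"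
    and stationary: "\<And>k. k < T \<Longrightarrow> grad k (\<theta> k) = 0"
    and C_pos: "C > 0"
    and tau_bound: "\<And>k. k < T \<Longrightarrow> (norm (\<tau> k))\<^sup>2 \<le> C"
    and eps: "0 < \<epsilon>" "\<epsilon> \<le> 1"
    and incoh: "\<And>k l. k < T \<Longrightarrow> l < T \<Longrightarrow> k \<noteq> l \<Longrightarrow>
                 \<bar>\<tau> k \<bullet> \<tau> l\<bar> \<le> \<epsilon> * norm (\<tau> k) * norm (\<tau> l)"
    and M: "1 \<le> M" "M < T"
    and recon: "(spec_norm_cols T (\<lambda>k. recon_col T M \<tau> We Wd k - \<tau> k))\<^sup>2 = lamM1"
    and i: "i < T"
    and alpha: "0 \<le> \<alpha>" "\<alpha> \<le> 1"
    and r_pos: "r > 0"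
    and r_ge: "r \<ge> 2 * sqrt C + sqrt lamM1"
    and Lsm_nonneg: "\<And>k. k < T \<Longrightarrow> Lsm k \<ge> 0"
    and smooth: "\<And>k x. k < T \<Longrightarrow> norm (x - \<theta> k) \<le> r \<Longrightarrow>
                 \<bar>\<L> k x - \<L> k (\<theta> k) - (x - \<theta> k) \<bullet> grad k (\<theta> k)\<bar>
                   \<le> Lsm k / 2 * (norm (x - \<theta> k))\<^sup>2"
  shows "\<forall>j<T. j \<noteq> i \<longrightarrow>
           \<L> j (\<theta>0 - \<alpha> *\<^sub>R recon_col T M \<tau> We Wd i) - \<L> j \<theta>0
             \<le> Lsm j * C * (5/2 + 2 * \<epsilon>) + Lsm j * lamM1"
  proof (intro allI impI)
  fix j assume j: "j < T" "j \<noteq> i"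
  define e where "e = recon_col T M \<tau> We Wd i - \<tau> i"
  define sp where "sp = spec_norm_cols T (\<lambda>k. recon_col T M \<tau> We Wd k - \<tau> k)"
  have e_sp: "norm e \<le> sp" unfolding e_def sp_def
    using col_le_spec[OF i, of "\<lambda>k. recon_col T M \<tau> We Wd k - \<tau> k"] by simp
  have lam: "lamM1 = sp\<^sup>2" using recon sp_def by simp
  have sp0: "0 \<le> sp" using e_sp norm_ge_zero order_trans by blast
  have e2: "(norm e)\<^sup>2 \<le> lamM1" unfolding lam using e_sp by (simp add: power_mono)
  have esq: "norm e \<le> sqrt lamM1" unfolding lam using e_sp sp0 by simp
  have ti: "norm (\<tau> i) \<le> sqrt C" using tau_bound[OF i] real_le_rsqrt by blast
  have tj: "norm (\<tau> j) \<le> sqrt C" using tau_bound[OF j(1)] real_le_rsqrt by blast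
  have C0: "0 \<le> sqrt C" using C_pos by simp
  define x where "x = \<theta>0 - \<alpha> *\<^sub>R recon_col T M \<tau> We Wd i"
  have xd: "x - \<theta> j = - (\<alpha> *\<^sub>R \<tau> i + \<tau> j + \<alpha> *\<^sub>R e)"
    unfolding x_def e_def \<tau>_def by (simp add: algebra_simps)
  have nx: "norm (x - \<theta> j) \<le> \<alpha> * norm (\<tau> i) + norm (\<tau> j) + \<alpha> * norm e"
  proof -
    have "norm (x - \<theta> j) = norm (\<alpha> *\<^sub>R \<tau> i + \<tau> j + \<alpha> *\<^sub>R e)" using xd by (metis norm_minus_cancel)
    also have "\<dots> \<le> norm (\<alpha> *\<^sub>R \<tau> i) + norm (\<tau> j) + norm (\<alpha> *\<^sub>R e)"
      by (meson add_mono norm_triangle_ineq order_trans order_refl)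
    finally show ?thesis using alpha by simp
  qed
  have "\<alpha> * norm (\<tau> i) \<le> sqrt C" using alpha ti
    by (meson mult_left_le_one_le norm_ge_zero order_trans)
  moreover have "\<alpha> * norm e \<le> sqrt lamM1" using alpha esq
    by (meson mult_left_le_one_le norm_ge_zero order_trans)
  ultimately have xr: "norm (x - \<theta> j) \<le> r" using nx tj r_ge by linarith
  have sm1: "\<L> j x - \<L> j (\<theta> j) \<le> Lsm j / 2 * (norm (x - \<theta> j))\<^sup>2"
  proof -
    have "\<bar>\<L> j x - \<L> j (\<theta> j)\<bar> \<le> Lsm j / 2 * (norm (x - \<theta> j))\<^sup>2"
      using smooth[OF j(1) xr] stationary[OF j(1)] by simp
    then show ?thesis by (smt (verit) abs_ge_self)
  qed
  have t0: "norm (\<theta>0 - \<theta> j) \<le> r"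
  proof -
    have "norm (\<theta>0 - \<theta> j) = norm (\<tau> j)" unfolding \<tau>_def by (simp add: norm_minus_commute)
    then show ?thesis using tj r_ge C0 esq norm_ge_zero[of e] C_pos by linarith
  qed
  have sm2: "\<L> j (\<theta> j) - \<L> j \<theta>0 \<le> Lsm j / 2 * (norm (\<tau> j))\<^sup>2"
  proof -
    have "\<bar>\<L> j \<theta>0 - \<L> j (\<theta> j)\<bar> \<le> Lsm j / 2 * (norm (\<tau> j))\<^sup>2"
      using smooth[OF j(1) t0] stationary[OF j(1)] unfolding \<tau>_def
      by (simp add: norm_minus_commute)
    then show ?thesis by (smt (verit) abs_ge_self)
  qed
  have tj2: "Lsm j / 2 * (norm (\<tau> j))\<^sup>2 \<le> Lsm j / 2 * C"
    using tau_bound[OF j(1)] Lsm_nonneg[OF j(1)] by (simp add: mult_left_mono)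
  have ip: "\<bar>\<tau> i \<bullet> \<tau> j\<bar> \<le> \<epsilon> * C"
  proof -
    have "\<bar>\<tau> i \<bullet> \<tau> j\<bar> \<le> \<epsilon> * (norm (\<tau> i) * norm (\<tau> j))"
      using incoh[OF i j(1)] j(2) by (simp add: mult.assoc)
    also have "\<dots> \<le> \<epsilon> * (sqrt C * sqrt C)"
      using eps ti tj C_pos by (intro mult_left_mono mult_mono) auto
    finally show ?thesis using C_pos by simp
  qed
  have a2: "(norm (\<alpha> *\<^sub>R \<tau> i + \<tau> j))\<^sup>2 \<le> 2 * C + 2 * \<epsilon> * C"
  proof -
    have "(norm (\<alpha> *\<^sub>R \<tau> i + \<tau> j))\<^sup>2 = \<alpha>\<^sup>2 * (norm (\<tau> i))\<^sup>2 + 2 * \<alpha> * (\<tau> i \<bullet> \<tau> j) + (norm (\<tau> j))\<^sup>2"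
      by (simp only: power2_norm_eq_inner) (simp add: inner_add_left inner_add_right inner_commute power2_eq_square algebra_simps)
    moreover have "\<alpha>\<^sup>2 * (norm (\<tau> i))\<^sup>2 \<le> C"
    proof -
      have "\<alpha>\<^sup>2 \<le> 1" using alpha by (simp add: abs_square_le_1)
      then show ?thesis using tau_bound[OF i]
        by (meson mult_left_le_one_le zero_le_power2 order_trans mult_le_cancel_right1 dual_order.trans mult_right_le_one_le)
    qed
    moreover have "2 * \<alpha> * (\<tau> i \<bullet> \<tau> j) \<le> 2 * \<epsilon> * C"
    proof -
      have "\<alpha> * (\<tau> i \<bullet> \<tau> j) \<le> \<alpha> * \<bar>\<tau> i \<bullet> \<tau> j\<bar>" using alpha by (simp add: mult_left_mono)
      also have "\<dots> \<le> \<bar>\<tau> i \<bullet> \<tau> j\<bar>" using alpha by (simp add: mult_left_le_one_le)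
      finally show ?thesis using ip by linarith
    qed
    ultimately show ?thesis using tau_bound[OF j(1)] by linarith
  qed
  have ae: "(norm (\<alpha> *\<^sub>R e))\<^sup>2 \<le> lamM1"
  proof -
    have "(norm (\<alpha> *\<^sub>R e))\<^sup>2 = \<alpha>\<^sup>2 * (norm e)\<^sup>2" using alpha by (simp add: power_mult_distrib)
    also have "\<dots> \<le> (norm e)\<^sup>2" using alpha by (simp add: abs_square_le_1 mult_left_le_one_le)
    finally show ?thesis using e2 by linarith
  qed
  have par: "(norm (u + w))\<^sup>2 \<le> 2 * (norm u)\<^sup>2 + 2 * (norm w)\<^sup>2" for u w :: 'a
  proof -
    have "norm (u + w) \<le> norm u + norm w" by (rule norm_triangle_ineq)
    then have "(norm (u + w))\<^sup>2 \<le> (norm u + norm w)\<^sup>2" by (simp add: power_mono)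
    also have "\<dots> \<le> 2 * (norm u)\<^sup>2 + 2 * (norm w)\<^sup>2"
      using zero_le_square[of "norm u - norm w"] by (simp add: power2_eq_square algebra_simps)
    finally show ?thesis .
  qed
  have nx2: "(norm (x - \<theta> j))\<^sup>2 \<le> 4 * C + 4 * \<epsilon> * C + 2 * lamM1"
  proof -
    have "(norm (x - \<theta> j))\<^sup>2 = (norm ((\<alpha> *\<^sub>R \<tau> i + \<tau> j) + \<alpha> *\<^sub>R e))\<^sup>2" using xd by (metis norm_minus_cancel)
    also have "\<dots> \<le> 2 * (norm (\<alpha> *\<^sub>R \<tau> i + \<tau> j))\<^sup>2 + 2 * (norm (\<alpha> *\<^sub>R e))\<^sup>2" by (rule par)
    finally show ?thesis using a2 ae by linarith
  qed
  have "Lsm j / 2 * (norm (x - \<theta> j))\<^sup>2 \<le> Lsm j / 2 * (4 * C + 4 * \<epsilon> * C + 2 * lamM1)"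
    using nx2 Lsm_nonneg[OF j(1)] by (simp add: mult_left_mono)
  then have "\<L> j x - \<L> j \<theta>0 \<le> Lsm j / 2 * (4 * C + 4 * \<epsilon> * C + 2 * lamM1) + Lsm j / 2 * C"
    using sm1 sm2 tj2 by linarith
  also have "\<dots> = Lsm j * C * (5/2 + 2 * \<epsilon>) + Lsm j * lamM1" by (simp add: algebra_simps)
  finally show "\<L> j (\<theta>0 - \<alpha> *\<^sub>R recon_col T M \<tau> We Wd i) - \<L> j \<theta>0
             \<le> Lsm j * C * (5/2 + 2 * \<epsilon>) + Lsm j * lamM1" unfolding x_def .
qed

end
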